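(* Fix a $C^0$-concept over $\mathbb{K}$ and let $k\in\mathbb{N}_0\cup\{\infty\}$. Let $E,F,H\in\mathcal{M}$, $U\subseteq E$ and $V\subseteq F$ open, and let $f\colon U\to F$ with $f(U)\subseteq V$ and $g\colon V\to H$ be of class $C^k$. Then $g\circ f\colon U\to H$ is of class $C^k$.
   Context: Let $\mathbb{K}$ be a commutative ring with unit carrying a topology. A $C^0$-concept over $\mathbb{K}$ consists of: (a) a class $\mathcal{M}$ of topologized $\mathbb{K}$-modules with $\mathbb{K}\in\mathcal{M}$; (b) for $E,F\in\mathcal{M}$ and open $U\subseteq E$, a set $C^0(U,F)$ of continuous maps; (c) for $E_1,E_2\in\mathcal{M}$ a topology on $E_1\times E_2$ (not necessarily the product topology) making it a member of $\mathcal{M}$; subject to: (I.1) composites of $C^0$-maps are $C^0$, identities and inclusions of open subsets are $C^0$; (I.2) $x\mapsto rx+b$ is $C^0$; (I.3) $t\mapsto tv+x$ is $C^0$; (I.4) $\mathbb{K}^\times$ is open and inversion is $C^0$; (I.5) $C^0$ is local on open covers; (II.1) projections and $v\mapsto(v,y)$, $w\mapsto(x,w)$ are $C^0$; (II.2) $f_1\times f_2$ is $C^0$ for $C^0$-maps $f_i$; (II.3) diagonals are $C^0$; (II.4) exchange/associativity maps of products are $C^0$ both ways; (II.5) addition and scalar multiplication are $C^0$; (III) a $C^0$-map on open $U\subseteq\mathbb{K}$ is determined by its values on $U\cap\mathbb{K}^\times$. For open $V\subseteq X$, $V^{[1]}=\{(x,v,t)\in V\times X\times\mathbb{K}:x+tv\in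 V\}$; a $C^0$-map $g$ is $C^1$ if there is a $C^0$-map $g^{[1]}\colon V^{[1]}\to Y$ with $g(x+tv)-g(x)=t\,g^{[1]}(x,v,t)$; recursively $V^{[k+1]}=(V^{[k]})^{[1]}$, $g$ is $C^{k+1}$ if $C^k$ and $g^{[k]}$ is $C^1$, $g^{[k+1]}=(g^{[k]})^{[1]}$; $C^\infty$ means $C^k$ for all $k\in\mathbb{N}_0$. *)

theory Defs
  imports "HOL-Analysis.Analysis" "HOL-Library.Extended_Nat"
begin

text \<open>All modules of the class M are encoded as topologized K-modules whose
carriers live in one common universe type 'u.  The ring K is embedded into 'u
by an injection cemb, and pairs are encoded by an injection cpr.\<close>

record ('k, 'u) tmod =
  mcar :: "'u set"
  mzero :: 'u
  madd :: "'u \<Rightarrow> 'u \<Rightarrow> 'u"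
  mneg :: "'u \<Rightarrow> 'u"
  msmul :: "'k \<Rightarrow> 'u \<Rightarrow> 'u"
  mtop :: "'u topology"

record ('k, 'u) c0c =
  cemb :: "'k \<Rightarrow> 'u"
  cKtop :: "'u topology"
  cpr :: "'u \<times> 'u \<Rightarrow> 'u"
  cprodtop :: "('k, 'u) tmod \<Rightarrow> ('k, 'u) tmod \<Rightarrow> 'u topology"
  cM :: "('k, 'u) tmod set"
  cC0 :: "('k, 'u) tmod \<Rightarrow> 'u set \<Rightarrow> ('k, 'u) tmod \<Rightarrow> ('u \<Rightarrow> 'u) \<Rightarrow> bool"

definition tmodule :: "('k::comm_ring_1, 'u) tmod \<Rightarrow> bool" where
  "tmodule E \<longleftrightarrow>
     topspace (mtop E) = mcar E \<and> mzero E \<in> mcar E \<and>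
     (\<forall>x\<in>mcar E. \<forall>y\<in>mcar E. madd E x y \<in> mcar E) \<and>
     (\<forall>x\<in>mcar E. mneg E x \<in> mcar E) \<and>
     (\<forall>r. \<forall>x\<in>mcar E. msmul E r x \<in> mcar E) \<and>
     (\<forall>x\<in>mcar E. \<forall>y\<in>mcar E. \<forall>z\<in>mcar E. madd E (madd E x y) z = madd E x (madd E y z)) \<and>
     (\<forall>x\<in>mcar E. \<forall>y\<in>mcar E. madd E x y = madd E y x) \<and>
     (\<forall>x\<in>mcar E. madd E (mzero E) x = x) \<and>
     (\<forall>x\<in>mcar E. madd E (mneg E x) x = mzero E) \<and>
     (\<forall>r. \<forall>x\<in>mcar E. \<forall>y\<in>mcar E. msmul E r (madd E x y) = madd E (msmul E r x) (msmul E r y)) \<and>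
     (\<forall>r s. \<forall>x\<in>mcar E. msmul E (r + s) x = madd E (msmul E r x) (msmul E s x)) \<and>
     (\<forall>r s. \<forall>x\<in>mcar E. msmul E (r * s) x = msmul E r (msmul E s x)) \<and>
     (\<forall>x\<in>mcar E. msmul E 1 x = x)"

definition kof :: "('k, 'u) c0c \<Rightarrow> 'u \<Rightarrow> 'k" where
  "kof S z = inv (cemb S) z"

text \<open>K itself as a member of M (topology of K transported into 'u).\<close>
definition Kmod :: "('k::comm_ring_1, 'u) c0c \<Rightarrow> ('k, 'u) tmod" where
  "Kmod S = \<lparr> mcar = range (cemb S), mzero = cemb S 0,
     madd = (\<lambda>a b. cemb S (kof S a + kof S b)),
     mneg = (\<lambda>a. cemb S (- kof S a)),
     msmul = (\<lambda>r a. cemb S (r * kof S a)),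
     mtop = cKtop S \<rparr>"

definition pfst :: "('k, 'u) c0c \<Rightarrow> 'u \<Rightarrow> 'u" where
  "pfst S z = fst (inv (cpr S) z)"

definition psnd :: "('k, 'u) c0c \<Rightarrow> 'u \<Rightarrow> 'u" where
  "psnd S z = snd (inv (cpr S) z)"

definition pmod :: "('k, 'u) c0c \<Rightarrow> ('k, 'u) tmod \<Rightarrow> ('k, 'u) tmod \<Rightarrow> ('k, 'u) tmod" where
  "pmod S E1 E2 = \<lparr> mcar = cpr S ` (mcar E1 \<times> mcar E2),
     mzero = cpr S (mzero E1, mzero E2),
     madd = (\<lambda>z w. cpr S (madd E1 (pfst S z) (pfst S w), madd E2 (psnd S z) (psnd S w))),
     mneg = (\<lambda>z. cpr S (mneg E1 (pfst S z), mneg E2 (psnd S z))),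
     msmul = (\<lambda>r z. cpr S (msmul E1 r (pfst S z), msmul E2 r (psnd S z))),
     mtop = cprodtop S E1 E2 \<rparr>"

definition Kunits :: "'k::comm_ring_1 set" where
  "Kunits = {t. \<exists>s. t * s = 1}"

definition kinv :: "'k::comm_ring_1 \<Rightarrow> 'k" where
  "kinv t = (THE s. t * s = 1)"

locale c0_concept =
  fixes S :: "('k::comm_ring_1, 'u) c0c"
  assumes emb_inj: "inj (cemb S)"
    and pr_inj: "inj (cpr S)"
    and Ktop_space: "topspace (cKtop S) = range (cemb S)"
    and M_tmodule: "\<And>E. E \<in> cM S \<Longrightarrow> tmodule E"
    and K_in_M: "Kmod S \<in> cM S"
    and prod_in_M: "\<And>E1 E2. E1 \<in> cM S \<Longrightarrow> E2 \<in> cM S \<Longrightarrow> pmod S E1 E2 \<in> cM S"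
    and C0_wf: "\<And>E U F f. cC0 S E U F f \<Longrightarrow>
       E \<in> cM S \<and> F \<in> cM S \<and> openin (mtop E) U \<and> f ` U \<subseteq> mcar F \<and>
       continuous_map (subtopology (mtop E) U) (mtop F) f"
    and C0_ext: "\<And>E U F f f'. cC0 S E U F f \<Longrightarrow> (\<And>x. x \<in> U \<Longrightarrow> f' x = f x) \<Longrightarrow> cC0 S E U F f'"
    and C0_comp: "\<And>E U F f V H g. cC0 S E U F f \<Longrightarrow> cC0 S F V H g \<Longrightarrow> f ` U \<subseteq> V \<Longrightarrow>
       cC0 S E U H (g \<circ> f)"
    and C0_id: "\<And>E U. E \<in> cM S \<Longrightarrow> openin (mtop E) U \<Longrightarrow> cC0 S E U E id"
    and C0_affine: "\<And>E r b. E \<in> cM S \<Longrightarrow> b \<in> mcar E \<Longrightarrow>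
       cC0 S E (mcar E) E (\<lambda>x. madd E (msmul E r x) b)"
    and C0_line: "\<And>E v x. E \<in> cM S \<Longrightarrow> v \<in> mcar E \<Longrightarrow> x \<in> mcar E \<Longrightarrow>
       cC0 S (Kmod S) (mcar (Kmod S)) E (\<lambda>s. madd E (msmul E (kof S s) v) x)"
    and units_open: "openin (cKtop S) (cemb S ` Kunits)"
    and C0_inv: "cC0 S (Kmod S) (cemb S ` Kunits) (Kmod S) (\<lambda>s. cemb S (kinv (kof S s)))"
    and C0_local: "\<And>E F \<U> f. E \<in> cM S \<Longrightarrow> F \<in> cM S \<Longrightarrow> (\<And>W. W \<in> \<U> \<Longrightarrow> cC0 S E W F f) \<Longrightarrow>
       cC0 S E (\<Union>\<U>) F f"
    and C0_pfst: "\<And>E1 E2. E1 \<in> cM S \<Longrightarrow> E2 \<in> cM S \<Longrightarrow>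
       cC0 S (pmod S E1 E2) (mcar (pmod S E1 E2)) E1 (pfst S)"
    and C0_psnd: "\<And>E1 E2. E1 \<in> cM S \<Longrightarrow> E2 \<in> cM S \<Longrightarrow>
       cC0 S (pmod S E1 E2) (mcar (pmod S E1 E2)) E2 (psnd S)"
    and C0_inl: "\<And>E1 E2 y. E1 \<in> cM S \<Longrightarrow> E2 \<in> cM S \<Longrightarrow> y \<in> mcar E2 \<Longrightarrow>
       cC0 S E1 (mcar E1) (pmod S E1 E2) (\<lambda>v. cpr S (v, y))"
    and C0_inr: "\<And>E1 E2 x. E1 \<in> cM S \<Longrightarrow> E2 \<in> cM S \<Longrightarrow> x \<in> mcar E1 \<Longrightarrow>
       cC0 S E2 (mcar E2) (pmod S E1 E2) (\<lambda>w. cpr S (x, w))"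
    and C0_prod: "\<And>E1 U1 F1 f1 E2 U2 F2 f2. cC0 S E1 U1 F1 f1 \<Longrightarrow> cC0 S E2 U2 F2 f2 \<Longrightarrow>
       cC0 S (pmod S E1 E2) (cpr S ` (U1 \<times> U2)) (pmod S F1 F2)
         (\<lambda>z. cpr S (f1 (pfst S z), f2 (psnd S z)))"
    and C0_diag: "\<And>E. E \<in> cM S \<Longrightarrow> cC0 S E (mcar E) (pmod S E E) (\<lambda>x. cpr S (x, x))"
    and C0_swap: "\<And>E1 E2. E1 \<in> cM S \<Longrightarrow> E2 \<in> cM S \<Longrightarrow>
       cC0 S (pmod S E1 E2) (mcar (pmod S E1 E2)) (pmod S E2 E1) (\<lambda>z. cpr S (psnd S z, pfst S z))"
    and C0_assoc: "\<And>E1 E2 E3. E1 \<in> cM S \<Longrightarrow> E2 \<in> cM S \<Longrightarrow> E3 \<in> cM S \<Longrightarrow>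
       cC0 S (pmod S (pmod S E1 E2) E3) (mcar (pmod S (pmod S E1 E2) E3)) (pmod S E1 (pmod S E2 E3))
         (\<lambda>z. cpr S (pfst S (pfst S z), cpr S (psnd S (pfst S z), psnd S z)))"
    and C0_assoc': "\<And>E1 E2 E3. E1 \<in> cM S \<Longrightarrow> E2 \<in> cM S \<Longrightarrow> E3 \<in> cM S \<Longrightarrow>
       cC0 S (pmod S E1 (pmod S E2 E3)) (mcar (pmod S E1 (pmod S E2 E3))) (pmod S (pmod S E1 E2) E3)
         (\<lambda>z. cpr S (cpr S (pfst S z, pfst S (psnd S z)), psnd S (psnd S z)))"
    and C0_add: "\<And>E. E \<in> cM S \<Longrightarrow>
       cC0 S (pmod S E E) (mcar (pmod S E E)) E (\<lambda>z. madd E (pfst S z) (psnd S z))"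
    and C0_smul: "\<And>E. E \<in> cM S \<Longrightarrow>
       cC0 S (pmod S (Kmod S) E) (mcar (pmod S (Kmod S) E)) E
         (\<lambda>z. msmul E (kof S (pfst S z)) (psnd S z))"
    \<comment> \<open>(III)\<close>
    and C0_ident: "\<And>U F f g z. cC0 S (Kmod S) U F f \<Longrightarrow> cC0 S (Kmod S) U F g \<Longrightarrow>
       (\<And>w. w \<in> U \<inter> cemb S ` Kunits \<Longrightarrow> f w = g w) \<Longrightarrow> z \<in> U \<Longrightarrow> f z = g z"

definition trip :: "('k, 'u) c0c \<Rightarrow> 'u \<Rightarrow> 'u \<Rightarrow> 'k \<Rightarrow> 'u" where
  "trip S x v t = cpr S (x, cpr S (v, cemb S t))"

definition Dmod :: "('k::comm_ring_1, 'u) c0c \<Rightarrow> ('k, 'u) tmod \<Rightarrow> ('k, 'u) tmod" where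
  "Dmod S E = pmod S E (pmod S E (Kmod S))"

definition Dset :: "('k, 'u) c0c \<Rightarrow> ('k, 'u) tmod \<Rightarrow> 'u set \<Rightarrow> 'u set" where
  "Dset S E V = {trip S x v t | x v t. x \<in> V \<and> v \<in> mcar E \<and> madd E x (msmul E t v) \<in> V}"

definition is_der :: "('k::comm_ring_1, 'u) c0c \<Rightarrow> ('k, 'u) tmod \<Rightarrow> 'u set \<Rightarrow> ('k, 'u) tmod
    \<Rightarrow> ('u \<Rightarrow> 'u) \<Rightarrow> ('u \<Rightarrow> 'u) \<Rightarrow> bool" where
  "is_der S E V F g g1 \<longleftrightarrow> cC0 S (Dmod S E) (Dset S E V) F g1 \<and>
     (\<forall>x v t. x \<in> V \<and> v \<in> mcar E \<and> madd E x (msmul E t v) \<in> V \<longrightarrow>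
        madd F (g (madd E x (msmul E t v))) (mneg F (g x)) = msmul F t (g1 (trip S x v t)))"

definition isC1 :: "('k::comm_ring_1, 'u) c0c \<Rightarrow> ('k, 'u) tmod \<Rightarrow> 'u set \<Rightarrow> ('k, 'u) tmod
    \<Rightarrow> ('u \<Rightarrow> 'u) \<Rightarrow> bool" where
  "isC1 S E V F g \<longleftrightarrow> cC0 S E V F g \<and> (\<exists>g1. is_der S E V F g g1)"

text \<open>g^[1] (chosen; unique on V^[1] by (III)).\<close>
definition der :: "('k::comm_ring_1, 'u) c0c \<Rightarrow> ('k, 'u) tmod \<Rightarrow> 'u set \<Rightarrow> ('k, 'u) tmod
    \<Rightarrow> ('u \<Rightarrow> 'u) \<Rightarrow> ('u \<Rightarrow> 'u)" where
  "der S E V F g = (SOME g1. is_der S E V F g g1)"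

definition dstep :: "('k::comm_ring_1, 'u) c0c \<Rightarrow> ('k, 'u) tmod
    \<Rightarrow> ('k, 'u) tmod \<times> 'u set \<times> ('u \<Rightarrow> 'u) \<Rightarrow> ('k, 'u) tmod \<times> 'u set \<times> ('u \<Rightarrow> 'u)" where
  "dstep S F = (\<lambda>(E, V, g). (Dmod S E, Dset S E V, der S E V F g))"

primrec isCn :: "('k::comm_ring_1, 'u) c0c \<Rightarrow> nat \<Rightarrow> ('k, 'u) tmod \<Rightarrow> 'u set \<Rightarrow> ('k, 'u) tmod
    \<Rightarrow> ('u \<Rightarrow> 'u) \<Rightarrow> bool" where
  "isCn S 0 E V F g = cC0 S E V F g"
| "isCn S (Suc n) E V F g = (isCn S n E V F g \<and>
     (case (dstep S F ^^ n) (E, V, g) of (E', V', g') \<Rightarrow> isC1 S E' V' F g'))"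

definition isCk :: "('k::comm_ring_1, 'u) c0c \<Rightarrow> enat \<Rightarrow> ('k, 'u) tmod \<Rightarrow> 'u set \<Rightarrow> ('k, 'u) tmod
    \<Rightarrow> ('u \<Rightarrow> 'u) \<Rightarrow> bool" where
  "isCk S k E V F g = (case k of enat n \<Rightarrow> isCn S n E V F g | \<infinity> \<Rightarrow> (\<forall>n. isCn S n E V F g))"

end

theory Submission
  imports Defs
begin

lemma tm_facts:
  assumes "tmodule E"
  shows tm_top: "topspace (mtop E) = mcar E"
  and tm_add: "x \<in> mcar E \<Longrightarrow> y \<in> mcar E \<Longrightarrow> madd E x y \<in> mcar E"
  and tm_neg: "x \<in> mcar E \<Longrightarrow> mneg E x \<in> mcar E"
  and tm_smul: "x \<in> mcar E \<Longrightarrow> msmul E r x \<in> mcar E"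
  and tm_comm: "x \<in> mcar E \<Longrightarrow> y \<in> mcar E \<Longrightarrow> madd E x y = madd E y x"
  and tm_zero: "mzero E \<in> mcar E"
  using assms unfolding tmodule_def by auto

lemma tm_sub1:
  assumes "tmodule E" "a \<in> mcar E" "b \<in> mcar E"
  shows "madd E (madd E a b) (mneg E a) = b"
proof -
  from assms(1) have A: "\<forall>x\<in>mcar E. \<forall>y\<in>mcar E. \<forall>z\<in>mcar E. madd E (madd E x y) z = madd E x (madd E y z)"
   and C: "\<forall>x\<in>mcar E. \<forall>y\<in>mcar E. madd E x y = madd E y x"
   and Z: "\<forall>x\<in>mcar E. madd E (mzero E) x = x"
   and N: "\<forall>x\<in>mcar E. madd E (mneg E x) x = mzero E"
   and NC: "\<forall>x\<in>mcar E. mneg E x \<in> mcar E"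
   and ZC: "mzero E \<in> mcar E"
   unfolding tmodule_def by auto
  have na: "mneg E a \<in> mcar E" using NC assms by auto
  have e1: "madd E a (mneg E a) = mzero E" using C N assms na by auto
  have e2: "madd E b (mzero E) = b" using C Z assms ZC by auto
  have "madd E (madd E a b) (mneg E a) = madd E (madd E b a) (mneg E a)" using C assms by auto
  also have "\<dots> = madd E b (madd E a (mneg E a))" using A assms na by auto
  also have "\<dots> = b" using e1 e2 by simp
  finally show ?thesis .
qed

lemma tm_sub2:
  assumes "tmodule E" "a \<in> mcar E" "b \<in> mcar E"
  shows "madd E a (madd E b (mneg E a)) = b"
proof -
  from assms(1) have A: "\<forall>x\<in>mcar E. \<forall>y\<in>mcar E. \<forall>z\<in>mcar E. madd E (madd E x y) z = madd E x (madd E y z)"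
   and NC: "\<forall>x\<in>mcar E. mneg E x \<in> mcar E"
   unfolding tmodule_def by auto
  have "madd E a (madd E b (mneg E a)) = madd E (madd E a b) (mneg E a)"
    using A NC assms by auto
  then show ?thesis using tm_sub1[OF assms] by simp
qed

lemma tm_cancel:
  assumes "tmodule E" "a \<in> mcar E" "b \<in> mcar E" "t * s = 1" "msmul E t a = msmul E t b"
  shows "a = b"
proof -
  from assms(1) have M: "\<forall>r s. \<forall>x\<in>mcar E. msmul E (r * s) x = msmul E r (msmul E s x)"
    and O: "\<forall>x\<in>mcar E. msmul E 1 x = x" unfolding tmodule_def by auto
  have st: "s * t = 1" using assms(4) by (simp add: mult.commute)
  have "a = msmul E (s*t) a" using O assms st by simp
  also have "\<dots> = msmul E s (msmul E t a)" using M assms by auto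
  also have "\<dots> = msmul E s (msmul E t b)" using assms by simp
  also have "\<dots> = msmul E (s*t) b" using M assms by auto
  also have "\<dots> = b" using O assms st by simp
  finally show ?thesis .
qed

context c0_concept begin

lemma pfst_cpr[simp]: "pfst S (cpr S (a,b)) = a"
  unfolding pfst_def using pr_inj by (simp add: inv_f_f)
lemma psnd_cpr[simp]: "psnd S (cpr S (a,b)) = b"
  unfolding psnd_def using pr_inj by (simp add: inv_f_f)
lemma kof_cemb[simp]: "kof S (cemb S t) = t"
  unfolding kof_def using emb_inj by (simp add: inv_f_f)
lemma mcar_Kmod[simp]: "mcar (Kmod S) = range (cemb S)" by (simp add: Kmod_def)
lemma mtop_Kmod[simp]: "mtop (Kmod S) = cKtop S" by (simp add: Kmod_def)
lemma mcar_pmod[simp]: "mcar (pmod S A B) = cpr S ` (mcar A \<times> mcar B)" by (simp add: pmod_def)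
lemma madd_pmod[simp]: "madd (pmod S A B) z w = cpr S (madd A (pfst S z) (pfst S w), madd B (psnd S z) (psnd S w))"
  by (simp add: pmod_def)
lemma mneg_pmod[simp]: "mneg (pmod S A B) z = cpr S (mneg A (pfst S z), mneg B (psnd S z))"
  by (simp add: pmod_def)
lemma msmul_pmod[simp]: "msmul (pmod S A B) r z = cpr S (msmul A r (pfst S z), msmul B r (psnd S z))"
  by (simp add: pmod_def)

lemma DM: "E \<in> cM S \<Longrightarrow> Dmod S E \<in> cM S"
  unfolding Dmod_def by (intro prod_in_M K_in_M)

lemma tmE: "E \<in> cM S \<Longrightarrow> tmodule E" by (rule M_tmodule)

lemma C0_restrict:
  assumes g: "cC0 S E V F g" and W: "openin (mtop E) W" and WV: "W \<subseteq> V"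
  shows "cC0 S E W F g"
proof -
  have E: "E \<in> cM S" using C0_wf[OF g] by auto
  have "cC0 S E W F (g \<circ> id)" by (rule C0_comp[OF C0_id[OF E W] g]) (use WV in auto)
  then show ?thesis by simp
qed

lemma C0_pair:
  assumes a: "cC0 S E W F1 a" and b: "cC0 S E W F2 b"
  shows "cC0 S E W (pmod S F1 F2) (\<lambda>z. cpr S (a z, b z))"
proof -
  from C0_wf[OF a] have E: "E \<in> cM S" and W: "openin (mtop E) W" by auto
  have WE: "W \<subseteq> mcar E" using openin_subset[OF W] tm_top[OF tmE[OF E]] by auto
  have d: "cC0 S E W (pmod S E E) (\<lambda>x. cpr S (x,x))"
    using C0_restrict[OF C0_diag[OF E] W WE] .
  have p: "cC0 S (pmod S E E) (cpr S ` (W \<times> W)) (pmod S F1 F2) (\<lambda>z. cpr S (a (pfst S z), b (psnd S z)))"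
    using C0_prod[OF a b] .
  have "cC0 S E W (pmod S F1 F2) ((\<lambda>z. cpr S (a (pfst S z), b (psnd S z))) \<circ> (\<lambda>x. cpr S (x,x)))"
    by (rule C0_comp[OF d p]) auto
  then show ?thesis by (rule C0_ext) simp
qed

definition lin where
  "lin E F L \<longleftrightarrow> E \<in> cM S \<and> F \<in> cM S \<and> cC0 S E (mcar E) F L \<and>
    (\<forall>x\<in>mcar E. \<forall>y\<in>mcar E. L (madd E x y) = madd F (L x) (L y)) \<and>
    (\<forall>t. \<forall>x\<in>mcar E. L (msmul E t x) = msmul F t (L x))"

lemma lin_pfst: "A \<in> cM S \<Longrightarrow> B \<in> cM S \<Longrightarrow> lin (pmod S A B) A (pfst S)"
  unfolding lin_def using prod_in_M C0_pfst by auto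

lemma lin_psnd: "A \<in> cM S \<Longrightarrow> B \<in> cM S \<Longrightarrow> lin (pmod S A B) B (psnd S)"
  unfolding lin_def using prod_in_M C0_psnd by auto

lemma lin_comp:
  assumes l1: "lin E F L1" and l2: "lin F G L2"
  shows "lin E G (\<lambda>x. L2 (L1 x))"
proof -
  have c1: "cC0 S E (mcar E) F L1" and c2: "cC0 S F (mcar F) G L2" using l1 l2 by (auto simp: lin_def)
  have im: "L1 ` mcar E \<subseteq> mcar F" using C0_wf[OF c1] by auto
  have "cC0 S E (mcar E) G (L2 \<circ> L1)" by (rule C0_comp[OF c1 c2 im])
  then have c: "cC0 S E (mcar E) G (\<lambda>x. L2 (L1 x))" by (simp add: o_def)
  have F: "F \<in> cM S" using l1 by (simp add: lin_def)
  show ?thesis using l1 l2 c im tm_add[OF tmE[OF F]] tm_smul[OF tmE[OF F]] unfolding lin_def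
    by (auto simp: image_subset_iff tm_add tm_smul)
qed

lemma lin_C0: "lin E F L \<Longrightarrow> cC0 S E (mcar E) F L" by (simp add: lin_def)

lemma Dset_open:
  assumes E: "E \<in> cM S" and V: "openin (mtop E) V"
  shows "openin (mtop (Dmod S E)) (Dset S E V)"
proof -
  let ?K = "Kmod S"
  let ?P = "pmod S E ?K"
  let ?D = "Dmod S E"
  have K: "?K \<in> cM S" by (rule K_in_M)
  have P: "?P \<in> cM S" using E K prod_in_M by auto
  have D: "?D \<in> cM S" using DM[OF E] .
  have DP: "?D = pmod S E ?P" by (simp add: Dmod_def)
  have l1: "lin ?D E (pfst S)" unfolding DP by (rule lin_pfst[OF E P])
  have l2: "lin ?D ?K (\<lambda>z. psnd S (psnd S z))" unfolding DP
    by (rule lin_comp[OF lin_psnd[OF E P] lin_psnd[OF E K]])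
  have l3: "lin ?D E (\<lambda>z. pfst S (psnd S z))" unfolding DP
    by (rule lin_comp[OF lin_psnd[OF E P] lin_pfst[OF E K]])
  have c23: "cC0 S ?D (mcar ?D) (pmod S ?K E) (\<lambda>z. cpr S (psnd S (psnd S z), pfst S (psnd S z)))"
    by (rule C0_pair[OF lin_C0[OF l2] lin_C0[OF l3]])
  have im23: "(\<lambda>z. cpr S (psnd S (psnd S z), pfst S (psnd S z))) ` mcar ?D \<subseteq> mcar (pmod S ?K E)"
    using C0_wf[OF c23] by auto
  have sm: "cC0 S ?D (mcar ?D) E ((\<lambda>z. msmul E (kof S (pfst S z)) (psnd S z)) \<circ> (\<lambda>z. cpr S (psnd S (psnd S z), pfst S (psnd S z))))"
    by (rule C0_comp[OF c23 C0_smul[OF E] im23])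
  have sm': "cC0 S ?D (mcar ?D) E (\<lambda>z. msmul E (kof S (psnd S (psnd S z))) (pfst S (psnd S z)))"
    by (rule C0_ext[OF sm]) simp
  have c4: "cC0 S ?D (mcar ?D) (pmod S E E) (\<lambda>z. cpr S (pfst S z, msmul E (kof S (psnd S (psnd S z))) (pfst S (psnd S z))))"
    by (rule C0_pair[OF lin_C0[OF l1] sm'])
  have im4: "(\<lambda>z. cpr S (pfst S z, msmul E (kof S (psnd S (psnd S z))) (pfst S (psnd S z)))) ` mcar ?D \<subseteq> mcar (pmod S E E)"
    using C0_wf[OF c4] by auto
  have c5: "cC0 S ?D (mcar ?D) E ((\<lambda>z. madd E (pfst S z) (psnd S z)) \<circ> (\<lambda>z. cpr S (pfst S z, msmul E (kof S (psnd S (psnd S z))) (pfst S (psnd S z)))))"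
    by (rule C0_comp[OF c4 C0_add[OF E] im4])
  define \<sigma> where "\<sigma> = (\<lambda>z. madd E (pfst S z) (msmul E (kof S (psnd S (psnd S z))) (pfst S (psnd S z))))"
  have c6: "cC0 S ?D (mcar ?D) E \<sigma>" unfolding \<sigma>_def by (rule C0_ext[OF c5]) simp
  have topD: "topspace (mtop ?D) = mcar ?D" using tm_top[OF tmE[OF D]] .
  have cont6: "continuous_map (mtop ?D) (mtop E) \<sigma>"
    using C0_wf[OF c6] topD by (metis subtopology_topspace)
  have cont1: "continuous_map (mtop ?D) (mtop E) (pfst S)"
    using C0_wf[OF lin_C0[OF l1]] topD by (metis subtopology_topspace)
  have o1: "openin (mtop ?D) {z \<in> topspace (mtop ?D). pfst S z \<in> V}"
    by (rule openin_continuous_map_preimage[OF cont1 V])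
  have o2: "openin (mtop ?D) {z \<in> topspace (mtop ?D). \<sigma> z \<in> V}"
    by (rule openin_continuous_map_preimage[OF cont6 V])
  have VE: "V \<subseteq> mcar E" using openin_subset[OF V] tm_top[OF tmE[OF E]] by auto
  have eq: "Dset S E V = {z \<in> topspace (mtop ?D). pfst S z \<in> V} \<inter> {z \<in> topspace (mtop ?D). \<sigma> z \<in> V}"
  proof (rule set_eqI, rule iffI)
    fix z assume "z \<in> Dset S E V"
    then obtain x v t where z: "z = trip S x v t" "x \<in> V" "v \<in> mcar E" "madd E x (msmul E t v) \<in> V"
      unfolding Dset_def by auto
    show "z \<in> {z \<in> topspace (mtop ?D). pfst S z \<in> V} \<inter> {z \<in> topspace (mtop ?D). \<sigma> z \<in> V}"
      using z VE unfolding topD \<sigma>_def by (auto simp: trip_def Dmod_def)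
  next
    fix z assume "z \<in> {z \<in> topspace (mtop ?D). pfst S z \<in> V} \<inter> {z \<in> topspace (mtop ?D). \<sigma> z \<in> V}"
    then have zD: "z \<in> mcar ?D" and z1: "pfst S z \<in> V" and z2: "\<sigma> z \<in> V" unfolding topD by auto
    from zD obtain x v t where z: "z = trip S x v t" "v \<in> mcar E"
      by (auto simp: trip_def Dmod_def)
    show "z \<in> Dset S E V" using z z1 z2 unfolding Dset_def \<sigma>_def by (auto simp: trip_def)
  qed
  show ?thesis unfolding eq by (rule openin_Int[OF o1 o2])
qed

lemma isCn_C0: "isCn S n E V F g \<Longrightarrow> cC0 S E V F g"
  by (induction n) auto

lemma dstep_Suc: "(dstep S F ^^ Suc n) (E,V,g) = (dstep S F ^^ n) (Dmod S E, Dset S E V, der S E V F g)"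
  by (simp add: funpow_Suc_right dstep_def del: funpow.simps)

lemma der_is_der: "isC1 S E V F g \<Longrightarrow> is_der S E V F g (der S E V F g)"
  unfolding isC1_def der_def by (metis someI)

lemma is_der_C0: "is_der S E V F g g1 \<Longrightarrow> cC0 S (Dmod S E) (Dset S E V) F g1"
  by (simp add: is_der_def)

lemma isCn_Suc_iff:
  "isCn S (Suc n) E V F g \<longleftrightarrow> isC1 S E V F g \<and> isCn S n (Dmod S E) (Dset S E V) F (der S E V F g)"
proof (induction n arbitrary: E V g)
  case 0
  show ?case using der_is_der[of E V F g] is_der_C0[of E V F g "der S E V F g"] by (auto simp: isC1_def)
next
  case (Suc n)
  have "isCn S (Suc (Suc n)) E V F g \<longleftrightarrow> isCn S (Suc n) E V F g \<and>
     (case (dstep S F ^^ Suc n) (E, V, g) of (E', V', g') \<Rightarrow> isC1 S E' V' F g')"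
    by (simp only: isCn.simps(2))
  also have "\<dots> \<longleftrightarrow> (isC1 S E V F g \<and> isCn S n (Dmod S E) (Dset S E V) F (der S E V F g)) \<and>
     (case (dstep S F ^^ n) (Dmod S E, Dset S E V, der S E V F g) of (E', V', g') \<Rightarrow> isC1 S E' V' F g')"
    using Suc.IH dstep_Suc by simp
  also have "\<dots> \<longleftrightarrow> isC1 S E V F g \<and> isCn S (Suc n) (Dmod S E) (Dset S E V) F (der S E V F g)"
    by (simp only: isCn.simps(2) conj_assoc)
  finally show ?case .
qed

lemma is_der_cong:
  assumes "\<And>x. x \<in> V \<Longrightarrow> g x = g' x"
  shows "is_der S E V F g = is_der S E V F g'"
  using assms by (auto simp: is_der_def fun_eq_iff)

lemma isCn_cong:
  assumes "isCn S n E V F g" "\<And>x. x \<in> V \<Longrightarrow> g x = g' x"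
  shows "isCn S n E V F g'"
proof (cases n)
  case 0
  then show ?thesis using assms C0_ext[of E V F g g'] by auto
next
  case (Suc m)
  have ide: "is_der S E V F g = is_der S E V F g'" by (rule is_der_cong[OF assms(2)])
  have de: "der S E V F g = der S E V F g'" unfolding der_def ide ..
  have c1: "isC1 S E V F g = isC1 S E V F g'"
    unfolding isC1_def ide using C0_ext[of E V F g g'] C0_ext[of E V F g' g] assms(2) by auto
  show ?thesis using assms(1) unfolding Suc isCn_Suc_iff c1 de .
qed

lemma der_unique:
  assumes g: "cC0 S E V F g" and d1: "is_der S E V F g g1" and d2: "is_der S E V F g g2"
    and x: "x \<in> V" and v: "v \<in> mcar E" and xv: "madd E x (msmul E t0 v) \<in> V"
  shows "g1 (trip S x v t0) = g2 (trip S x v t0)"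
proof -
  let ?K = "Kmod S"
  let ?D = "Dmod S E"
  have c1: "cC0 S ?D (Dset S E V) F g1" using d1 by (simp add: is_der_def)
  have c2: "cC0 S ?D (Dset S E V) F g2" using d2 by (simp add: is_der_def)
  have E: "E \<in> cM S" and F: "F \<in> cM S" and V: "openin (mtop E) V" using C0_wf[OF g] by auto
  have im1: "g1 ` Dset S E V \<subseteq> mcar F"
    using C0_wf[OF c1] by auto
  have im2: "g2 ` Dset S E V \<subseteq> mcar F" using C0_wf[OF c2] by auto
  have K: "?K \<in> cM S" by (rule K_in_M)
  have VE: "V \<subseteq> mcar E" using openin_subset[OF V] tm_top[OF tmE[OF E]] by auto
  have xE: "x \<in> mcar E" using x VE by auto
  define l where "l = (\<lambda>s. madd E (msmul E (kof S s) v) x)"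
  have cl: "cC0 S ?K (mcar ?K) E l" unfolding l_def by (rule C0_line[OF E v xE])
  define Ux where "Ux = {s \<in> topspace (cKtop S). l s \<in> V}"
  have contl: "continuous_map (cKtop S) (mtop E) l"
    using C0_wf[OF cl] Ktop_space by (metis mcar_Kmod mtop_Kmod subtopology_topspace)
  have Uxo: "openin (mtop ?K) Ux" unfolding Ux_def mtop_Kmod
    by (rule openin_continuous_map_preimage[OF contl V])
  define \<tau> where "\<tau> = (\<lambda>s. cpr S (x, cpr S (v, s)))"
  have ca: "cC0 S ?K (mcar ?K) (pmod S E ?K) (\<lambda>w. cpr S (v, w))" by (rule C0_inr[OF E K v])
  have cb: "cC0 S (pmod S E ?K) (mcar (pmod S E ?K)) ?D (\<lambda>w. cpr S (x, w))"
    unfolding Dmod_def by (rule C0_inr[OF E _ xE]) (use E K prod_in_M in auto)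
  have "cC0 S ?K (mcar ?K) ?D ((\<lambda>w. cpr S (x, w)) \<circ> (\<lambda>w. cpr S (v, w)))"
    by (rule C0_comp[OF ca cb]) (use v in auto)
  then have ct: "cC0 S ?K (mcar ?K) ?D \<tau>" unfolding \<tau>_def by (simp add: o_def)
  have UxK: "Ux \<subseteq> mcar ?K" unfolding Ux_def using Ktop_space by auto
  have ct': "cC0 S ?K Ux ?D \<tau>" by (rule C0_restrict[OF ct Uxo UxK])
  have tr: "\<tau> (cemb S t) = trip S x v t" for t by (simp add: \<tau>_def trip_def)
  have \<tau>im: "\<tau> ` Ux \<subseteq> Dset S E V"
  proof
    fix z assume "z \<in> \<tau> ` Ux"
    then obtain t where z: "z = trip S x v t" and lt: "l (cemb S t) \<in> V"
      unfolding Ux_def using Ktop_space tr by auto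
    have "madd E x (msmul E t v) = l (cemb S t)"
      unfolding l_def using tm_comm[OF tmE[OF E] xE tm_smul[OF tmE[OF E] v]] by simp
    then have "madd E x (msmul E t v) \<in> V" using lt by simp
    then show "z \<in> Dset S E V" using z x v unfolding Dset_def by blast
  qed
  have e1: "cC0 S ?K Ux F (g1 \<circ> \<tau>)" by (rule C0_comp[OF ct' c1 \<tau>im])
  have e2: "cC0 S ?K Ux F (g2 \<circ> \<tau>)" by (rule C0_comp[OF ct' c2 \<tau>im])
  have z0: "cemb S t0 \<in> Ux"
  proof -
    have "l (cemb S t0) = madd E x (msmul E t0 v)"
      unfolding l_def using tm_comm[OF tmE[OF E] xE tm_smul[OF tmE[OF E] v]] by simp
    then show ?thesis unfolding Ux_def using xv Ktop_space by auto
  qed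
  have "(g1 \<circ> \<tau>) (cemb S t0) = (g2 \<circ> \<tau>) (cemb S t0)"
  proof (rule C0_ident[OF e1 e2 _ z0])
    fix w assume w: "w \<in> Ux \<inter> cemb S ` Kunits"
    then obtain t s where wt: "w = cemb S t" and ts: "t * s = 1" unfolding Kunits_def by auto
    have "\<tau> w \<in> Dset S E V" using \<tau>im w by auto
    then have "trip S x v t \<in> Dset S E V" using wt tr by simp
    then have m1: "g1 (trip S x v t) \<in> mcar F" and m2: "g2 (trip S x v t) \<in> mcar F" using im1 im2 by auto
    have "l (cemb S t) = madd E x (msmul E t v)"
      unfolding l_def using tm_comm[OF tmE[OF E] xE tm_smul[OF tmE[OF E] v]] by simp
    then have lt: "madd E x (msmul E t v) \<in> V" using w wt unfolding Ux_def by auto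
    have "msmul F t (g1 (trip S x v t)) = msmul F t (g2 (trip S x v t))"
      using d1 d2 x v lt unfolding is_der_def by metis
    then have "g1 (trip S x v t) = g2 (trip S x v t)" by (rule tm_cancel[OF tmE[OF F] m1 m2 ts])
    then show "(g1 \<circ> \<tau>) w = (g2 \<circ> \<tau>) w" using wt tr by simp
  qed
  then show ?thesis using tr by simp
qed


lemma isCn_SucI:
  assumes g: "cC0 S E V F g" and d: "is_der S E V F g g1"
    and n: "isCn S n (Dmod S E) (Dset S E V) F g1"
  shows "isCn S (Suc n) E V F g"
proof -
  have c1: "isC1 S E V F g" using g d by (auto simp: isC1_def)
  have dd: "is_der S E V F g (der S E V F g)" using der_is_der[OF c1] .
  have "isCn S n (Dmod S E) (Dset S E V) F (der S E V F g)"
  proof (rule isCn_cong[OF n])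
    fix z assume "z \<in> Dset S E V"
    then obtain x v t where z: "z = trip S x v t" "x \<in> V" "v \<in> mcar E" "madd E x (msmul E t v) \<in> V"
      unfolding Dset_def by auto
    show "g1 z = der S E V F g z" using der_unique[OF g d dd z(2-4)] z(1) by simp
  qed
  then show ?thesis using c1 isCn_Suc_iff by simp
qed

lemma isCn_SucD:
  assumes "isCn S (Suc n) E V F g"
  shows "cC0 S E V F g" "is_der S E V F g (der S E V F g)"
    "isCn S n (Dmod S E) (Dset S E V) F (der S E V F g)"
  using assms isCn_Suc_iff[of n E V F g] der_is_der[of E V F g] by (auto simp: isC1_def)

lemma lin_Cn: "lin E F L \<Longrightarrow> openin (mtop E) V \<Longrightarrow> isCn S n E V F L"
proof (induction n arbitrary: E F L V)
  case 0
  have E: "E \<in> cM S" using 0 by (simp add: lin_def)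
  have VE: "V \<subseteq> mcar E" using openin_subset[OF 0(2)] tm_top[OF tmE[OF E]] by auto
  show ?case using C0_restrict[OF lin_C0[OF 0(1)] 0(2) VE] by simp
next
  case (Suc n)
  have E: "E \<in> cM S" and F: "F \<in> cM S" using Suc.prems by (auto simp: lin_def)
  let ?K = "Kmod S"
  let ?P = "pmod S E ?K"
  let ?D = "Dmod S E"
  have K: "?K \<in> cM S" by (rule K_in_M)
  have P: "?P \<in> cM S" using E K prod_in_M by auto
  have DP: "?D = pmod S E ?P" by (simp add: Dmod_def)
  have l3: "lin ?D E (\<lambda>z. pfst S (psnd S z))" unfolding DP
    by (rule lin_comp[OF lin_psnd[OF E P] lin_pfst[OF E K]])
  have l: "lin ?D F (\<lambda>z. L (pfst S (psnd S z)))" by (rule lin_comp[OF l3 Suc.prems(1)])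
  have Do: "openin (mtop ?D) (Dset S E V)" by (rule Dset_open[OF E Suc.prems(2)])
  have n: "isCn S n ?D (Dset S E V) F (\<lambda>z. L (pfst S (psnd S z)))" by (rule Suc.IH[OF l Do])
  have D: "?D \<in> cM S" by (rule DM[OF E])
  have DsD: "Dset S E V \<subseteq> mcar ?D" using openin_subset[OF Do] tm_top[OF tmE[OF D]] by auto
  have VE: "V \<subseteq> mcar E" using openin_subset[OF Suc.prems(2)] tm_top[OF tmE[OF E]] by auto
  have c0: "cC0 S E V F L" by (rule C0_restrict[OF lin_C0[OF Suc.prems(1)] Suc.prems(2) VE])
  have tE: "tmodule E" "tmodule F" using tmE E F by auto
  have LE: "L ` mcar E \<subseteq> mcar F" using C0_wf[OF lin_C0[OF Suc.prems(1)]] by auto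
  have d: "is_der S E V F L (\<lambda>z. L (pfst S (psnd S z)))"
    unfolding is_der_def
  proof (intro conjI allI impI)
    show "cC0 S ?D (Dset S E V) F (\<lambda>z. L (pfst S (psnd S z)))"
      by (rule C0_restrict[OF lin_C0[OF l] Do DsD])
    fix x v t assume a: "x \<in> V \<and> v \<in> mcar E \<and> madd E x (msmul E t v) \<in> V"
    then have xE: "x \<in> mcar E" and vE: "v \<in> mcar E" using VE by auto
    have tv: "msmul E t v \<in> mcar E" using tm_smul[OF tE(1) vE] .
    have "L (madd E x (msmul E t v)) = madd F (L x) (msmul F t (L v))"
      using Suc.prems(1) xE vE tv unfolding lin_def by auto
    moreover have "L x \<in> mcar F" "msmul F t (L v) \<in> mcar F" using LE xE vE tm_smul[OF tE(2)] by auto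
    ultimately show "madd F (L (madd E x (msmul E t v))) (mneg F (L x)) =
         msmul F t (L (pfst S (psnd S (trip S x v t))))"
      using tm_sub1[OF tE(2)] by (simp add: trip_def)
  qed
  show ?case by (rule isCn_SucI[OF c0 d n])
qed

lemma pair_Cn:
  "isCn S n E W F1 a \<Longrightarrow> isCn S n E W F2 b \<Longrightarrow> isCn S n E W (pmod S F1 F2) (\<lambda>z. cpr S (a z, b z))"
proof (induction n arbitrary: E W a b)
  case 0
  then show ?case using C0_pair by simp
next
  case (Suc n)
  note a = isCn_SucD[OF Suc.prems(1)]
  note b = isCn_SucD[OF Suc.prems(2)]
  define a1 where "a1 = der S E W F1 a"
  define b1 where "b1 = der S E W F2 b"
  have n: "isCn S n (Dmod S E) (Dset S E W) (pmod S F1 F2) (\<lambda>z. cpr S (a1 z, b1 z))"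
    using Suc.IH a(3) b(3) unfolding a1_def b1_def by blast
  have d: "is_der S E W (pmod S F1 F2) (\<lambda>z. cpr S (a z, b z)) (\<lambda>z. cpr S (a1 z, b1 z))"
    using a(2) b(2) C0_pair unfolding is_der_def a1_def b1_def by simp
  show ?case by (rule isCn_SucI[OF C0_pair[OF a(1) b(1)] d n])
qed

lemma chain_Cn:
  "E \<in> cM S \<Longrightarrow> F \<in> cM S \<Longrightarrow> H \<in> cM S \<Longrightarrow> openin (mtop E) U \<Longrightarrow> openin (mtop F) V \<Longrightarrow>
   f ` U \<subseteq> V \<Longrightarrow> isCn S n E U F f \<Longrightarrow> isCn S n F V H g \<Longrightarrow> isCn S n E U H (g \<circ> f)"
proof (induction n arbitrary: E F H U V f g)
  case 0
  then show ?case using C0_comp[of E U F f V H g] by (simp del: comp_apply add: comp_def[symmetric])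
next
  case (Suc n)
  note E = Suc.prems(1) and F = Suc.prems(2) and H = Suc.prems(3)
    and U = Suc.prems(4) and V = Suc.prems(5) and fUV = Suc.prems(6)
  note fd = isCn_SucD[OF Suc.prems(7)]
  note gd = isCn_SucD[OF Suc.prems(8)]
  define f1 where "f1 = der S E U F f"
  define g1 where "g1 = der S F V H g"
  have fn: "isCn S n E U F f" and gn: "isCn S n F V H g" using Suc.prems(7,8) by auto
  have df: "is_der S E U F f f1" and dg: "is_der S F V H g g1" using fd gd f1_def g1_def by auto
  have f1n: "isCn S n (Dmod S E) (Dset S E U) F f1" using fd f1_def by simp
  have g1n: "isCn S n (Dmod S F) (Dset S F V) H g1" using gd g1_def by simp
  let ?K = "Kmod S"
  have K: "?K \<in> cM S" by (rule K_in_M)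
  have PE: "pmod S E ?K \<in> cM S" and PF: "pmod S F ?K \<in> cM S" using E F K prod_in_M by auto
  have DE: "Dmod S E \<in> cM S" and DF: "Dmod S F \<in> cM S" using DM E F by auto
  have DUo: "openin (mtop (Dmod S E)) (Dset S E U)" by (rule Dset_open[OF E U])
  have DVo: "openin (mtop (Dmod S F)) (Dset S F V)" by (rule Dset_open[OF F V])
  have DP: "Dmod S E = pmod S E (pmod S E ?K)" by (simp add: Dmod_def)
  have pf: "isCn S n (Dmod S E) (Dset S E U) E (pfst S)"
    by (rule lin_Cn[OF _ DUo]) (unfold DP, rule lin_pfst[OF E PE])
  have pp: "isCn S n (Dmod S E) (Dset S E U) ?K (\<lambda>z. psnd S (psnd S z))"
    by (rule lin_Cn[OF _ DUo]) (unfold DP, rule lin_comp[OF lin_psnd[OF E PE] lin_psnd[OF E K]])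
  have pfU: "pfst S ` Dset S E U \<subseteq> U" by (auto simp: Dset_def trip_def)
  have ffn: "isCn S n (Dmod S E) (Dset S E U) F (f \<circ> pfst S)"
    by (rule Suc.IH[OF DE E F DUo U pfU pf fn])
  define \<phi> where "\<phi> = (\<lambda>z. cpr S ((f \<circ> pfst S) z, cpr S (f1 z, psnd S (psnd S z))))"
  have \<phi>n: "isCn S n (Dmod S E) (Dset S E U) (Dmod S F) \<phi>"
    unfolding \<phi>_def Dmod_def[of S F] by (rule pair_Cn[OF ffn pair_Cn[OF f1n pp]])
  have tF: "tmodule F" "tmodule H" using tmE F H by auto
  have f1c: "cC0 S (Dmod S E) (Dset S E U) F f1" using df by (simp add: is_der_def)
  have f1im: "f1 ` Dset S E U \<subseteq> mcar F" using C0_wf[OF f1c] by auto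
  have VF: "V \<subseteq> mcar F" using openin_subset[OF V] tm_top[OF tF(1)] by auto
  have key: "f (madd E x (msmul E t v)) = madd F (f x) (msmul F t (f1 (trip S x v t)))
      \<and> f1 (trip S x v t) \<in> mcar F \<and> \<phi> (trip S x v t) = trip S (f x) (f1 (trip S x v t)) t"
    if a: "x \<in> U" "v \<in> mcar E" "madd E x (msmul E t v) \<in> U" for x v t
  proof -
    have z: "trip S x v t \<in> Dset S E U" using a unfolding Dset_def by blast
    have m: "f1 (trip S x v t) \<in> mcar F" using f1im z by auto
    have e: "madd F (f (madd E x (msmul E t v))) (mneg F (f x)) = msmul F t (f1 (trip S x v t))"
      using df a unfolding is_der_def by blast
    have fx: "f x \<in> mcar F" "f (madd E x (msmul E t v)) \<in> mcar F" using a fUV VF by auto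
    have "madd F (f x) (msmul F t (f1 (trip S x v t))) = f (madd E x (msmul E t v))"
      using tm_sub2[OF tF(1) fx] e by simp
    then show ?thesis using m by (simp add: \<phi>_def trip_def)
  qed
  have \<phi>im: "\<phi> ` Dset S E U \<subseteq> Dset S F V"
  proof
    fix w assume "w \<in> \<phi> ` Dset S E U"
    then obtain x v t where w: "w = \<phi> (trip S x v t)" and a: "x \<in> U" "v \<in> mcar E" "madd E x (msmul E t v) \<in> U"
      unfolding Dset_def by auto
    note k = key[OF a]
    have "madd F (f x) (msmul F t (f1 (trip S x v t))) \<in> V" using k a(3) fUV by (metis image_subset_iff)
    moreover have "f x \<in> V" using a fUV by auto
    ultimately show "w \<in> Dset S F V" using k w unfolding Dset_def by blast
  qed
  have hn: "isCn S n (Dmod S E) (Dset S E U) H (g1 \<circ> \<phi>)"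
    by (rule Suc.IH[OF DE DF H DUo DVo \<phi>im \<phi>n g1n])
  have gfc: "cC0 S E U H (g \<circ> f)" by (rule C0_comp[OF fd(1) gd(1) fUV])
  have dh: "is_der S E U H (g \<circ> f) (g1 \<circ> \<phi>)"
    unfolding is_der_def
  proof (intro conjI allI impI)
    show "cC0 S (Dmod S E) (Dset S E U) H (g1 \<circ> \<phi>)" by (rule isCn_C0[OF hn])
    fix x v t assume "x \<in> U \<and> v \<in> mcar E \<and> madd E x (msmul E t v) \<in> U"
    then have a: "x \<in> U" "v \<in> mcar E" "madd E x (msmul E t v) \<in> U" by auto
    note k = key[OF a]
    have fxV: "f x \<in> V" using a fUV by auto
    have yV: "madd F (f x) (msmul F t (f1 (trip S x v t))) \<in> V" using k a(3) fUV by (metis image_subset_iff)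
    have "madd H (g (madd F (f x) (msmul F t (f1 (trip S x v t))))) (mneg H (g (f x)))
        = msmul H t (g1 (trip S (f x) (f1 (trip S x v t)) t))"
      using dg fxV k yV unfolding is_der_def by blast
    then show "madd H ((g \<circ> f) (madd E x (msmul E t v))) (mneg H ((g \<circ> f) x)) =
         msmul H t ((g1 \<circ> \<phi>) (trip S x v t))" using k by simp
  qed
  show ?case by (rule isCn_SucI[OF gfc dh hn])
qed


end

theorem proposition4p5:
  fixes S :: "('k::comm_ring_1, 'u) c0c" and k :: enat
    and E F H :: "('k, 'u) tmod" and U V :: "'u set" and f g :: "'u \<Rightarrow> 'u"
  assumes "c0_concept S"
    and "E \<in> cM S" and "F \<in> cM S" and "H \<in> cM S"
    and "openin (mtop E) U" and "openin (mtop F) V"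
    and "f ` U \<subseteq> V"
    and "isCk S k E U F f" and "isCk S k F V H g"
  shows "isCk S k E U H (g \<circ> f)"
proof -
  interpret c0_concept S by fact
  show ?thesis
  proof (cases k)
    case (enat n)
    then show ?thesis using assms chain_Cn[of E F H U V f n g] by (simp add: isCk_def)
  next
    case infinity
    then show ?thesis using assms chain_Cn[of E F H U V f _ g] by (simp add: isCk_def)
  qed
qed

end
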